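(* Let $I$ be an interpretation of bounded range, and let $\mathcal{C}$ be a class of (possibly colored) graphs of locally almost bounded degree. Then $I(\mathcal{C})=\{I(G):G\in\mathcal{C}\}$ is locally almost near-covered.
   Context: Graphs are finite, simple, and may be colored by unary predicates; graph-theoretic properties refer to the underlying graph. $N^G(v)$ is the set of neighbors of $v$; $N_r^G(v)$ is the closed $r$-neighborhood of $v$; $\mathrm{dist}_G$ is graph distance. A class $\mathcal{C}$ has locally almost bounded degree if there exist $f,d:\mathbb{N}\to\mathbb{N}$ such that for every $r$, every $G\in\mathcal{C}$ and every $v\in V(G)$, $N_r^G(v)$ contains at most $f(r)$ vertices of degree larger than $d(r)$ in $G$. An interpretation $I=(\psi,\delta)$ consists of first-order formulas $\psi(x,y)$, $\delta(x)$ in the signature of (colored) graphs, $\psi$ symmetric and irreflexive; $I(G)$ has vertex set $\{v:G\models\delta(v)\}$ and edges $uv$ ($u\ne v$) with $G\models\psi(u,v)$. $\psi$ has range $b$ if for all $G$ and $u,v$, $\mathrm{dist}_G(u,v)>b$ implies $G\not\models\psi(u,v)$; $I$ has bounded range if $\psi$ has range $b$ for some $b$. Two vertices are $k$-near-twins in $G$ if $|N^G(u)\,\Delta\,N^G(v)|\le k$. $G$ is $(k,m)$-near-covered if every set of pairwise non-$k$-near-twin vertices has size at most $m$. A class is locally almost near-covered if there exist $k,m:\mathbb{N}\to\mathbb{N}$ such that for every $r$, every graph $G$ in the class and every $v\in V(G)$, $G[N_r^G(v)]$ is $(k(r),m(r))$-near-covered. *)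

theory Defs
  imports Main
begin

record 'v cgraph =
  verts :: "'v set"
  adj :: "'v \<Rightarrow> 'v \<Rightarrow> bool"
  col :: "nat \<Rightarrow> 'v set"

definition wf_cgraph :: "('v, 'b) cgraph_scheme \<Rightarrow> bool" where
  "wf_cgraph G \<longleftrightarrow> finite (verts G)
     \<and> (\<forall>u v. adj G u v \<longrightarrow> adj G v u)
     \<and> (\<forall>u. \<not> adj G u u)
     \<and> (\<forall>u v. adj G u v \<longrightarrow> u \<in> verts G \<and> v \<in> verts G)
     \<and> (\<forall>i. col G i \<subseteq> verts G)"

definition nbrs :: "'v cgraph \<Rightarrow> 'v \<Rightarrow> 'v set" where
  "nbrs G v = {u \<in> verts G. adj G v u}"

definition degree :: "'v cgraph \<Rightarrow> 'v \<Rightarrow> nat" where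
  "degree G v = card (nbrs G v)"

fun reach :: "'v cgraph \<Rightarrow> nat \<Rightarrow> 'v \<Rightarrow> 'v \<Rightarrow> bool" where
  "reach G 0 u v = (u = v)"
| "reach G (Suc n) u v = (reach G n u v \<or> (\<exists>w. reach G n u w \<and> adj G w v))"

definition ball :: "'v cgraph \<Rightarrow> nat \<Rightarrow> 'v \<Rightarrow> 'v set" where
  "ball G r v = {u \<in> verts G. reach G r v u}"

definition induced :: "'v cgraph \<Rightarrow> 'v set \<Rightarrow> 'v cgraph" where
  "induced G X = \<lparr> verts = verts G \<inter> X,
                    adj = (\<lambda>u v. adj G u v \<and> u \<in> X \<and> v \<in> X),
                    col = (\<lambda>i. col G i \<inter> X) \<rparr>"

datatype fm =
    Eq nat nat
  | Adj nat nat
  | Col nat nat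
  | Neg fm
  | Conj fm fm
  | Ex nat fm

fun sat :: "'v cgraph \<Rightarrow> (nat \<Rightarrow> 'v) \<Rightarrow> fm \<Rightarrow> bool" where
  "sat G s (Eq x y) = (s x = s y)"
| "sat G s (Adj x y) = adj G (s x) (s y)"
| "sat G s (Col i x) = (s x \<in> col G i)"
| "sat G s (Neg \<phi>) = (\<not> sat G s \<phi>)"
| "sat G s (Conj \<phi> \<psi>) = (sat G s \<phi> \<and> sat G s \<psi>)"
| "sat G s (Ex x \<phi>) = (\<exists>a\<in>verts G. sat G (s(x := a)) \<phi>)"

text \<open>Binary formula \<open>\<psi>(x,y)\<close> with x = variable 0, y = variable 1;
  unary formula \<open>\<delta>(x)\<close> with x = variable 0.\<close>
definition sat2 :: "'v cgraph \<Rightarrow> fm \<Rightarrow> 'v \<Rightarrow> 'v \<Rightarrow> bool" where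
  "sat2 G \<psi> u v = sat G (\<lambda>i. if i = 1 then v else u) \<psi>"

definition sat1 :: "'v cgraph \<Rightarrow> fm \<Rightarrow> 'v \<Rightarrow> bool" where
  "sat1 G \<delta> u = sat G (\<lambda>_. u) \<delta>"

text \<open>Graphs are finite; vertex type nat represents all finite graphs up to isomorphism.\<close>
definition is_interpretation :: "fm \<Rightarrow> fm \<Rightarrow> bool" where
  "is_interpretation \<psi> \<delta> \<longleftrightarrow>
     (\<forall>G :: nat cgraph. wf_cgraph G \<longrightarrow>
        (\<forall>u\<in>verts G. \<forall>v\<in>verts G. sat2 G \<psi> u v \<longleftrightarrow> sat2 G \<psi> v u)
      \<and> (\<forall>u\<in>verts G. \<not> sat2 G \<psi> u u))"

definition interp :: "fm \<Rightarrow> fm \<Rightarrow> 'v cgraph \<Rightarrow> 'v cgraph" where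
  "interp \<psi> \<delta> G =
     (let W = {v \<in> verts G. sat1 G \<delta> v} in
      \<lparr> verts = W,
        adj = (\<lambda>u v. u \<in> W \<and> v \<in> W \<and> u \<noteq> v \<and> sat2 G \<psi> u v),
        col = (\<lambda>_. {}) \<rparr>)"

definition has_range :: "fm \<Rightarrow> nat \<Rightarrow> bool" where
  "has_range \<psi> b \<longleftrightarrow>
     (\<forall>G :: nat cgraph. wf_cgraph G \<longrightarrow>
        (\<forall>u\<in>verts G. \<forall>v\<in>verts G. \<not> reach G b u v \<longrightarrow> \<not> sat2 G \<psi> u v))"

definition locally_almost_bounded_degree :: "'v cgraph set \<Rightarrow> bool" where
  "locally_almost_bounded_degree C \<longleftrightarrow>
     (\<exists>f d :: nat \<Rightarrow> nat. \<forall>r. \<forall>G\<in>C. \<forall>v\<in>verts G.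
        card {u \<in> ball G r v. degree G u > d r} \<le> f r)"

definition near_twins :: "'v cgraph \<Rightarrow> nat \<Rightarrow> 'v \<Rightarrow> 'v \<Rightarrow> bool" where
  "near_twins G k u v \<longleftrightarrow>
     card ((nbrs G u - nbrs G v) \<union> (nbrs G v - nbrs G u)) \<le> k"

definition near_covered :: "'v cgraph \<Rightarrow> nat \<Rightarrow> nat \<Rightarrow> bool" where
  "near_covered G k m \<longleftrightarrow>
     (\<forall>S \<subseteq> verts G. (\<forall>u\<in>S. \<forall>v\<in>S. u \<noteq> v \<longrightarrow> \<not> near_twins G k u v) \<longrightarrow> card S \<le> m)"

definition locally_almost_near_covered :: "'v cgraph set \<Rightarrow> bool" where
  "locally_almost_near_covered C \<longleftrightarrow>
     (\<exists>k m :: nat \<Rightarrow> nat. \<forall>r. \<forall>G\<in>C. \<forall>v\<in>verts G.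
        near_covered (induced G (ball G r v)) (k r) (m r))"

end

theory Submission
  imports Defs
begin


definition Gm :: "nat cgraph \<Rightarrow> nat set \<Rightarrow> nat cgraph" where
  "Gm G Y = G\<lparr>adj := (\<lambda>a b. adj G a b \<and> a \<notin> Y \<and> b \<notin> Y)\<rparr>"

lemma Gm_simps[simp]: "verts (Gm G Y) = verts G" "col (Gm G Y) = col G"
  "adj (Gm G Y) a b = (adj G a b \<and> a \<notin> Y \<and> b \<notin> Y)"
  by (simp_all add: Gm_def)

lemma reach_mono: "reach H j a b \<Longrightarrow> j \<le> k \<Longrightarrow> reach H k a b"
proof (induction k)
  case 0 then show ?case by simp
next
  case (Suc k) then show ?case by (cases "j = Suc k") (auto simp: le_Suc_eq)
qed

lemma reach_trans: "reach H j a b \<Longrightarrow> reach H k b c \<Longrightarrow> reach H (j+k) a c"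
proof (induction k arbitrary: c)
  case 0 then show ?case by simp
next
  case (Suc k) then show ?case by auto
qed

lemma reach_one: "adj H a b \<Longrightarrow> reach H 1 a b"
  by (auto intro: exI[of _ a])

lemma reach_sym: assumes "\<And>a b. adj H a b \<Longrightarrow> adj H b a"
  shows "reach H j a b \<Longrightarrow> reach H j b a"
proof (induction j arbitrary: a b)
  case 0 then show ?case by simp
next
  case (Suc j)
  then consider "reach H j a b" | c where "reach H j a c" "adj H c b" by auto
  then show ?case
  proof cases
    case 1 then show ?thesis using Suc by auto
  next
    case 2
    have "reach H 1 b c" using 2 assms reach_one by metis
    moreover have "reach H j c a" using 2 Suc by auto
    ultimately have "reach H (1+j) b a" by (rule reach_trans)
    then show ?thesis by simp
  qed
qed

lemma reach_verts: "reach H j a b \<Longrightarrow> a \<in> verts H \<Longrightarrow> (\<And>x y. adj H x y \<Longrightarrow> y \<in> verts H) \<Longrightarrow> b \<in> verts H"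
  by (induction j arbitrary: b) auto

lemma reach_sub: "reach H j a b \<Longrightarrow> (\<And>x y. adj H x y \<Longrightarrow> adj H' x y) \<Longrightarrow> reach H' j a b"
  by (induction j arbitrary: b) auto

lemma reach_Gm_Y: "reach (Gm G Y) j a y \<Longrightarrow> y \<in> Y \<Longrightarrow> y = a"
  by (induction j arbitrary: y) auto

fun qr :: "fm \<Rightarrow> nat" where
  "qr (Eq x y) = 0" | "qr (Adj x y) = 0" | "qr (Col i x) = 0"
| "qr (Neg \<phi>) = qr \<phi>" | "qr (Conj \<phi> \<psi>) = max (qr \<phi>) (qr \<psi>)" | "qr (Ex x \<phi>) = Suc (qr \<phi>)"

fun cols :: "fm \<Rightarrow> nat set" where
  "cols (Eq x y) = {}" | "cols (Adj x y) = {}" | "cols (Col i x) = {i}"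
| "cols (Neg \<phi>) = cols \<phi>" | "cols (Conj \<phi> \<psi>) = cols \<phi> \<union> cols \<psi>" | "cols (Ex x \<phi>) = cols \<phi>"

lemma finite_cols: "finite (cols \<phi>)" by (induction \<phi>) auto

fun mg :: "nat \<Rightarrow> nat" where "mg 0 = 1" | "mg (Suc n) = 3 * mg n + 1"

lemma mg_ge1: "1 \<le> mg n" by (induction n) auto



locale loc =
  fixes G :: "nat cgraph" and Y :: "nat set" and K :: "nat set" and R :: nat
    and u w :: nat and \<sigma> \<tau> :: "nat \<Rightarrow> nat"
  assumes wf: "wf_cgraph G"
  and uv: "u \<in> verts G" and wv: "w \<in> verts G" and uY: "u \<notin> Y" and wY: "w \<notin> Y"
  and far: "\<not> reach (Gm G Y) (2*R+2) u w"
  and sig: "\<And>a. reach (Gm G Y) R u a \<Longrightarrow> reach (Gm G Y) R w (\<sigma> a) \<and> \<tau> (\<sigma> a) = a"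
  and tau: "\<And>b. reach (Gm G Y) R w b \<Longrightarrow> reach (Gm G Y) R u (\<tau> b) \<and> \<sigma> (\<tau> b) = b"
  and sroot: "\<sigma> u = w"
  and sadj: "\<And>a b. reach (Gm G Y) R u a \<Longrightarrow> reach (Gm G Y) R u b \<Longrightarrow> (adj G a b \<longleftrightarrow> adj G (\<sigma> a) (\<sigma> b))"
  and scol: "\<And>a i. reach (Gm G Y) R u a \<Longrightarrow> i \<in> K \<Longrightarrow> (a \<in> col G i \<longleftrightarrow> \<sigma> a \<in> col G i)"
  and sY: "\<And>a y. reach (Gm G Y) R u a \<Longrightarrow> y \<in> Y \<Longrightarrow> (adj G a y \<longleftrightarrow> adj G (\<sigma> a) y)"
  and sdist: "\<And>a k. reach (Gm G Y) R u a \<Longrightarrow> k \<le> R \<Longrightarrow> (reach (Gm G Y) k u a \<longleftrightarrow> reach (Gm G Y) k w (\<sigma> a))"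
begin

abbreviation "rc \<equiv> reach (Gm G Y)"

definition near :: "nat \<Rightarrow> nat \<Rightarrow> bool" where "near j z \<longleftrightarrow> rc j u z \<or> rc j w z"
definition safe :: "nat \<Rightarrow> nat \<Rightarrow> nat \<Rightarrow> bool" where
  "safe \<rho> m z \<longleftrightarrow> near (\<rho> - Suc m) z \<or> \<not> near (\<rho> + m) z"
definition pi :: "nat \<Rightarrow> nat \<Rightarrow> nat" where
  "pi \<rho> z = (if rc \<rho> u z then \<sigma> z else if rc \<rho> w z then \<tau> z else z)"

lemma adj_sym: "adj G a b \<Longrightarrow> adj G b a" using wf by (auto simp: wf_cgraph_def)
lemma adj_verts: "adj G a b \<Longrightarrow> b \<in> verts G" using wf by (auto simp: wf_cgraph_def)

lemma rc_sym: "rc j a b \<Longrightarrow> rc j b a"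
proof -
  have "\<And>x y. adj (Gm G Y) x y \<Longrightarrow> adj (Gm G Y) y x" using adj_sym by auto
  then show "rc j a b \<Longrightarrow> rc j b a" by (rule reach_sym)
qed

lemma rc_verts_u: "rc j u a \<Longrightarrow> a \<in> verts G"
  using reach_verts[of "Gm G Y" j u a] uv adj_verts by auto
lemma rc_verts_w: "rc j w a \<Longrightarrow> a \<in> verts G"
  using reach_verts[of "Gm G Y" j w a] wv adj_verts by auto

lemma disj: "rc j u z \<Longrightarrow> rc k w z \<Longrightarrow> j + k \<le> 2*R+2 \<Longrightarrow> False"
proof -
  assume a: "rc j u z" "rc k w z" "j + k \<le> 2*R+2"
  have "rc k z w" using rc_sym[OF a(2)] .
  then have "rc (j+k) u w" by (rule reach_trans[OF a(1)])
  then have "rc (2*R+2) u w" using a(3) by (rule reach_mono)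
  then show False using far by (rule notE[rotated])
qed

lemma tadj: "rc R w a \<Longrightarrow> rc R w b \<Longrightarrow> (adj G a b \<longleftrightarrow> adj G (\<tau> a) (\<tau> b))"
  using sadj[of "\<tau> a" "\<tau> b"] tau[of a] tau[of b] by auto
lemma tcol: "rc R w a \<Longrightarrow> i \<in> K \<Longrightarrow> (a \<in> col G i \<longleftrightarrow> \<tau> a \<in> col G i)"
  using scol[of "\<tau> a" i] tau[of a] by auto
lemma tY: "rc R w a \<Longrightarrow> y \<in> Y \<Longrightarrow> (adj G a y \<longleftrightarrow> adj G (\<tau> a) y)"
  using sY[of "\<tau> a" y] tau[of a] by auto
lemma tdist: "rc R w a \<Longrightarrow> k \<le> R \<Longrightarrow> (rc k w a \<longleftrightarrow> rc k u (\<tau> a))"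
  using sdist[of "\<tau> a" k] tau[of a] by auto

lemma pi_u: "rc \<rho> u z \<Longrightarrow> pi \<rho> z = \<sigma> z" unfolding pi_def by simp

lemma not_uw: assumes "rc \<rho> w z" "\<rho> \<le> R" "j \<le> R" shows "\<not> rc j u z"
proof
  assume "rc j u z"
  from disj[OF this assms(1)] assms(2,3) show False by linarith
qed

lemma not_wu: assumes "rc \<rho> u z" "\<rho> \<le> R" "j \<le> R" shows "\<not> rc j w z"
proof
  assume "rc j w z"
  from disj[OF assms(1) this] assms(2,3) show False by linarith
qed

lemma pi_w: assumes "rc \<rho> w z" "\<rho> \<le> R" shows "pi \<rho> z = \<tau> z"
proof -
  have "\<not> rc \<rho> u z" using not_uw[OF assms assms(2)] .
  then show ?thesis using assms(1) unfolding pi_def by simp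
qed

lemma pi_o: "\<not> near \<rho> z \<Longrightarrow> pi \<rho> z = z" unfolding pi_def near_def by simp

lemma pi_verts: assumes z: "z \<in> verts G" and r: "\<rho> \<le> R" shows "pi \<rho> z \<in> verts G"
proof (cases "rc \<rho> u z")
  case True
  then have "rc R u z" using r by (rule reach_mono)
  then have "rc R w (\<sigma> z)" using sig by blast
  then show ?thesis using pi_u[OF True] rc_verts_w by simp
next
  case False
  show ?thesis
  proof (cases "rc \<rho> w z")
    case True
    then have "rc R w z" using r by (rule reach_mono)
    then have "rc R u (\<tau> z)" using tau by blast
    then show ?thesis using pi_w[OF True r] rc_verts_u by simp
  next
    case False2: False
    have "pi \<rho> z = z" using False False2 unfolding pi_def by simp
    then show ?thesis using z by simp
  qed
qed

lemma pi_inv: assumes r: "\<rho> \<le> R" shows "pi \<rho> (pi \<rho> z) = z"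
proof (cases "rc \<rho> u z")
  case True
  then have R: "rc R u z" using r by (rule reach_mono)
  have w1: "rc \<rho> w (\<sigma> z)" using sdist[OF R r] True by blast
  have "pi \<rho> z = \<sigma> z" using pi_u[OF True] .
  moreover have "pi \<rho> (\<sigma> z) = \<tau> (\<sigma> z)" using pi_w[OF w1 r] .
  ultimately show ?thesis using sig[OF R] by simp
next
  case False
  show ?thesis
  proof (cases "rc \<rho> w z")
    case True
    then have R: "rc R w z" using r by (rule reach_mono)
    have u1: "rc \<rho> u (\<tau> z)" using tdist[OF R r] True by blast
    have "pi \<rho> z = \<tau> z" using pi_w[OF True r] .
    moreover have "pi \<rho> (\<tau> z) = \<sigma> (\<tau> z)" using pi_u[OF u1] .
    ultimately show ?thesis using tau[OF R] by simp
  next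
    case False2: False
    have "pi \<rho> z = z" using False False2 unfolding pi_def by simp
    then show ?thesis using False False2 unfolding pi_def by simp
  qed
qed

lemma near_pi: assumes r: "\<rho> \<le> R" and j: "j \<le> R" shows "near j (pi \<rho> z) \<longleftrightarrow> near j z"
proof (cases "rc \<rho> u z")
  case True
  then have R: "rc R u z" using r by (rule reach_mono)
  have w1: "rc \<rho> w (\<sigma> z)" using sdist[OF R r] True by blast
  have "\<not> rc j w z" using not_wu[OF True r j] .
  moreover have "\<not> rc j u (\<sigma> z)" using not_uw[OF w1 r j] .
  moreover have "rc j u z \<longleftrightarrow> rc j w (\<sigma> z)" using sdist[OF R j] .
  ultimately show ?thesis using pi_u[OF True] unfolding near_def by simp
next
  case False
  show ?thesis
  proof (cases "rc \<rho> w z")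
    case True
    then have R: "rc R w z" using r by (rule reach_mono)
    have u1: "rc \<rho> u (\<tau> z)" using tdist[OF R r] True by blast
    have "\<not> rc j u z" using not_uw[OF True r j] .
    moreover have "\<not> rc j w (\<tau> z)" using not_wu[OF u1 r j] .
    moreover have "rc j w z \<longleftrightarrow> rc j u (\<tau> z)" using tdist[OF R j] .
    ultimately show ?thesis using pi_w[OF True r] unfolding near_def by simp
  next
    case False2: False
    have "pi \<rho> z = z" using False False2 unfolding pi_def by simp
    then show ?thesis by simp
  qed
qed

lemma safe_pi: assumes "\<rho>' \<le> R" "\<rho> + m \<le> R" shows "safe \<rho> m (pi \<rho>' z) \<longleftrightarrow> safe \<rho> m z"
proof -
  have "\<rho> - Suc m \<le> R" "\<rho> + m \<le> R" using assms by auto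
  then show ?thesis unfolding safe_def using near_pi[OF assms(1)] by metis
qed

end


context loc begin

lemma nonY_u: "rc j u z \<Longrightarrow> z \<notin> Y" using reach_Gm_Y uY by blast
lemma nonY_w: "rc j w z \<Longrightarrow> z \<notin> Y" using reach_Gm_Y wY by blast

lemma pi_Y: assumes "y \<in> Y" shows "pi \<rho> y = y"
proof -
  have "\<not> rc \<rho> u y" using nonY_u assms by blast
  moreover have "\<not> rc \<rho> w y" using nonY_w assms by blast
  ultimately show ?thesis unfolding pi_def by simp
qed

lemma pi_Y_adj: assumes y: "y \<in> Y" and r: "\<rho> \<le> R"
  shows "adj G z y \<longleftrightarrow> adj G (pi \<rho> z) y"
proof (cases "rc \<rho> u z")
  case True
  then have R: "rc R u z" using r by (rule reach_mono)
  show ?thesis using sY[OF R y] pi_u[OF True] by simp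
next
  case False
  show ?thesis
  proof (cases "rc \<rho> w z")
    case True
    then have R: "rc R w z" using r by (rule reach_mono)
    show ?thesis using tY[OF R y] pi_w[OF True r] by simp
  next
    case False2: False
    have "pi \<rho> z = z" using False False2 unfolding pi_def by simp
    then show ?thesis by simp
  qed
qed

lemma pi_col: assumes i: "i \<in> K" and r: "\<rho> \<le> R"
  shows "z \<in> col G i \<longleftrightarrow> pi \<rho> z \<in> col G i"
proof (cases "rc \<rho> u z")
  case True
  then have R: "rc R u z" using r by (rule reach_mono)
  show ?thesis using scol[OF R i] pi_u[OF True] by simp
next
  case False
  show ?thesis
  proof (cases "rc \<rho> w z")
    case True
    then have R: "rc R w z" using r by (rule reach_mono)
    show ?thesis using tcol[OF R i] pi_w[OF True r] by simp
  next
    case False2: False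
    have "pi \<rho> z = z" using False False2 unfolding pi_def by simp
    then show ?thesis by simp
  qed
qed

lemma pi_inj: assumes "\<rho> \<le> R" "pi \<rho> a = pi \<rho> b" shows "a = b"
proof -
  have "a = pi \<rho> (pi \<rho> a)" using pi_inv[OF assms(1)] by simp
  also have "\<dots> = pi \<rho> (pi \<rho> b)" using assms(2) by (rule arg_cong)
  also have "\<dots> = b" using pi_inv[OF assms(1)] by simp
  finally show ?thesis .
qed

lemma no_edge: assumes "rc (\<rho> - 2) c a" "\<not> rc (\<rho> - 1) c b" "a \<notin> Y" "b \<notin> Y" "2 \<le> \<rho>"
  shows "\<not> adj G a b \<and> \<not> adj G b a"
proof -
  have "\<not> adj G a b"
  proof
    assume "adj G a b"
    then have "adj (Gm G Y) a b" using assms(3,4) by simp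
    then have "rc (Suc (\<rho> - 2)) c b" using assms(1) by auto
    moreover have "Suc (\<rho> - 2) = \<rho> - 1" using assms(5) by simp
    ultimately show False using assms(2) by simp
  qed
  then show ?thesis using adj_sym by blast
qed

lemma mixed:
  assumes "rc (\<rho> - 2) c a" "\<not> rc (\<rho> - 1) c b" "a \<notin> Y" "b \<notin> Y"
    "rc (\<rho> - 2) c' a'" "\<not> rc (\<rho> - 1) c' b'" "a' \<notin> Y" "b' \<notin> Y" "2 \<le> \<rho>"
  shows "(adj G a b \<longleftrightarrow> adj G a' b') \<and> (adj G b a \<longleftrightarrow> adj G b' a')"
  using no_edge[OF assms(1-4,9)] no_edge[OF assms(5-9)] by blast

definition cls :: "nat \<Rightarrow> nat \<Rightarrow> nat" where
  "cls \<rho> z = (if rc (\<rho> - 2) u z then 0 else if rc (\<rho> - 2) w z then 1 else 2)"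

lemma rc_mono_not: assumes "\<not> rc k a z" "j \<le> k" shows "\<not> rc j a z"
proof
  assume "rc j a z"
  from reach_mono[OF this assms(2)] assms(1) show False by contradiction
qed

lemma classify: assumes "safe \<rho> m z" "1 \<le> m" "Suc m \<le> \<rho>"
  shows "rc (\<rho> - 2) u z \<or> rc (\<rho> - 2) w z \<or> \<not> near (\<rho> + 1) z"
proof -
  have l: "\<rho> - Suc m \<le> \<rho> - 2" "\<rho> + 1 \<le> \<rho> + m" using assms by auto
  have "rc (\<rho> - Suc m) u z \<or> rc (\<rho> - Suc m) w z \<or> \<not> rc (\<rho> + m) u z \<and> \<not> rc (\<rho> + m) w z"
    using assms(1) unfolding safe_def near_def by blast
  moreover have "rc (\<rho> - Suc m) u z \<Longrightarrow> rc (\<rho> - 2) u z" by (erule reach_mono[OF _ l(1)])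
  moreover have "rc (\<rho> - Suc m) w z \<Longrightarrow> rc (\<rho> - 2) w z" by (erule reach_mono[OF _ l(1)])
  moreover have "\<not> rc (\<rho> + m) u z \<Longrightarrow> \<not> rc (\<rho> + 1) u z" by (erule rc_mono_not[OF _ l(2)])
  moreover have "\<not> rc (\<rho> + m) w z \<Longrightarrow> \<not> rc (\<rho> + 1) w z" by (erule rc_mono_not[OF _ l(2)])
  ultimately show ?thesis unfolding near_def by blast
qed

lemma Iu_facts: assumes A: "rc (\<rho> - 2) u z" and r: "\<rho> \<le> R"
  shows "pi \<rho> z = \<sigma> z \<and> rc (\<rho> - 2) w (\<sigma> z) \<and> \<not> rc (\<rho> - 1) w z \<and> \<not> rc (\<rho> - 1) u (\<sigma> z)
     \<and> z \<notin> Y \<and> \<sigma> z \<notin> Y \<and> rc R u z"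
proof -
  have l: "\<rho> - 2 \<le> R" "\<rho> - 1 \<le> R" "\<rho> - 2 \<le> \<rho>" using r by auto
  have R: "rc R u z" using A l(1) by (rule reach_mono)
  have a: "rc \<rho> u z" using A l(3) by (rule reach_mono)
  have b: "rc (\<rho> - 2) w (\<sigma> z)" using sdist[OF R l(1)] A by blast
  have 1: "pi \<rho> z = \<sigma> z" by (rule pi_u[OF a])
  have 2: "\<not> rc (\<rho> - 1) w z" by (rule not_wu[OF A l(1) l(2)])
  have 3: "\<not> rc (\<rho> - 1) u (\<sigma> z)" by (rule not_uw[OF b l(1) l(2)])
  have 4: "z \<notin> Y" by (rule nonY_u[OF A])
  have 5: "\<sigma> z \<notin> Y" by (rule nonY_w[OF b])
  show ?thesis using 1 2 3 4 5 b R by (intro conjI)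
qed

lemma Iw_facts: assumes A: "rc (\<rho> - 2) w z" and r: "\<rho> \<le> R"
  shows "pi \<rho> z = \<tau> z \<and> rc (\<rho> - 2) u (\<tau> z) \<and> \<not> rc (\<rho> - 1) u z \<and> \<not> rc (\<rho> - 1) w (\<tau> z)
     \<and> z \<notin> Y \<and> \<tau> z \<notin> Y \<and> rc R w z"
proof -
  have l: "\<rho> - 2 \<le> R" "\<rho> - 1 \<le> R" "\<rho> - 2 \<le> \<rho>" using r by auto
  have R: "rc R w z" using A l(1) by (rule reach_mono)
  have a: "rc \<rho> w z" using A l(3) by (rule reach_mono)
  have b: "rc (\<rho> - 2) u (\<tau> z)" using tdist[OF R l(1)] A by blast
  have 1: "pi \<rho> z = \<tau> z" by (rule pi_w[OF a r])
  have 2: "\<not> rc (\<rho> - 1) u z" by (rule not_uw[OF A l(1) l(2)])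
  have 3: "\<not> rc (\<rho> - 1) w (\<tau> z)" by (rule not_wu[OF b l(1) l(2)])
  have 4: "z \<notin> Y" by (rule nonY_w[OF A])
  have 5: "\<tau> z \<notin> Y" by (rule nonY_u[OF b])
  show ?thesis using 1 2 3 4 5 b R by (intro conjI)
qed

lemma O_facts: assumes "\<not> near (\<rho> + 1) z"
  shows "pi \<rho> z = z \<and> \<not> rc (\<rho> - 1) u z \<and> \<not> rc (\<rho> - 1) w z"
proof -
  have nu: "\<not> rc (\<rho> + 1) u z" and nw: "\<not> rc (\<rho> + 1) w z" using assms unfolding near_def by auto
  have l1: "\<rho> \<le> \<rho> + 1" "\<rho> - 1 \<le> \<rho> + 1" by auto
  have "\<not> rc \<rho> u z" by (rule rc_mono_not[OF nu l1(1)])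
  moreover have "\<not> rc \<rho> w z" by (rule rc_mono_not[OF nw l1(1)])
  moreover have "\<not> rc (\<rho> - 1) u z" by (rule rc_mono_not[OF nu l1(2)])
  moreover have "\<not> rc (\<rho> - 1) w z" by (rule rc_mono_not[OF nw l1(2)])
  ultimately show ?thesis using pi_o unfolding near_def by blast
qed

lemma pi_adj_nonY: assumes "1 \<le> m" "Suc m \<le> \<rho>" "\<rho> \<le> R" "safe \<rho> m z1" "safe \<rho> m z2"
   "z1 \<notin> Y" "z2 \<notin> Y"
  shows "adj G z1 z2 \<longleftrightarrow> adj G (pi \<rho> z1) (pi \<rho> z2)"
proof -
  have r2: "2 \<le> \<rho>" using assms by auto
  have c1: "rc (\<rho> - 2) u z1 \<or> rc (\<rho> - 2) w z1 \<or> \<not> near (\<rho> + 1) z1" using classify assms by blast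
  have c2: "rc (\<rho> - 2) u z2 \<or> rc (\<rho> - 2) w z2 \<or> \<not> near (\<rho> + 1) z2" using classify assms by blast
  show ?thesis
  proof -
    { assume A: "rc (\<rho> - 2) u z1" and B: "rc (\<rho> - 2) u z2"
      have ?thesis using Iu_facts[OF A assms(3)] Iu_facts[OF B assms(3)] sadj by metis }
    moreover
    { assume A: "rc (\<rho> - 2) w z1" and B: "rc (\<rho> - 2) w z2"
      have ?thesis using Iw_facts[OF A assms(3)] Iw_facts[OF B assms(3)] tadj by metis }
    moreover
    { assume A: "\<not> near (\<rho> + 1) z1" and B: "\<not> near (\<rho> + 1) z2"
      have ?thesis using O_facts[OF A] O_facts[OF B] by simp }
    moreover
    { assume A: "rc (\<rho> - 2) u z1" and B: "rc (\<rho> - 2) w z2"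
      note a = Iu_facts[OF A assms(3)] and b = Iw_facts[OF B assms(3)]
      have ?thesis using mixed[of \<rho> u z1 z2 w "\<sigma> z1" "\<tau> z2"] a b A assms(6,7) r2 by auto }
    moreover
    { assume A: "rc (\<rho> - 2) w z1" and B: "rc (\<rho> - 2) u z2"
      note a = Iw_facts[OF A assms(3)] and b = Iu_facts[OF B assms(3)]
      have ?thesis using mixed[of \<rho> u z2 z1 w "\<sigma> z2" "\<tau> z1"] a b B assms(6,7) r2 by auto }
    moreover
    { assume A: "rc (\<rho> - 2) u z1" and B: "\<not> near (\<rho> + 1) z2"
      note a = Iu_facts[OF A assms(3)] and b = O_facts[OF B]
      have ?thesis using mixed[of \<rho> u z1 z2 w "\<sigma> z1" z2] a b A assms(6,7) r2 by auto }
    moreover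
    { assume A: "\<not> near (\<rho> + 1) z1" and B: "rc (\<rho> - 2) u z2"
      note a = O_facts[OF A] and b = Iu_facts[OF B assms(3)]
      have ?thesis using mixed[of \<rho> u z2 z1 w "\<sigma> z2" z1] a b B assms(6,7) r2 by auto }
    moreover
    { assume A: "rc (\<rho> - 2) w z1" and B: "\<not> near (\<rho> + 1) z2"
      note a = Iw_facts[OF A assms(3)] and b = O_facts[OF B]
      have ?thesis using mixed[of \<rho> w z1 z2 u "\<tau> z1" z2] a b A assms(6,7) r2 by auto }
    moreover
    { assume A: "\<not> near (\<rho> + 1) z1" and B: "rc (\<rho> - 2) w z2"
      note a = O_facts[OF A] and b = Iw_facts[OF B assms(3)]
      have ?thesis using mixed[of \<rho> w z2 z1 u "\<tau> z2" z1] a b B assms(6,7) r2 by auto }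
    ultimately show ?thesis using c1 c2 by blast
  qed
qed

lemma pi_adj: assumes "1 \<le> m" "Suc m \<le> \<rho>" "\<rho> \<le> R" "safe \<rho> m z1" "safe \<rho> m z2"
  shows "adj G z1 z2 \<longleftrightarrow> adj G (pi \<rho> z1) (pi \<rho> z2)"
proof (cases "z1 \<in> Y")
  case True
  have "adj G z1 z2 \<longleftrightarrow> adj G z2 z1" using adj_sym by blast
  also have "\<dots> \<longleftrightarrow> adj G (pi \<rho> z2) z1" using pi_Y_adj[OF True assms(3)] .
  also have "\<dots> \<longleftrightarrow> adj G z1 (pi \<rho> z2)" using adj_sym by blast
  finally show ?thesis using pi_Y[OF True] by simp
next
  case False
  show ?thesis
  proof (cases "z2 \<in> Y")
    case True
    show ?thesis using pi_Y_adj[OF True assms(3)] pi_Y[OF True] by simp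
  next
    case False2: False
    show ?thesis using pi_adj_nonY[OF assms False False2] .
  qed
qed

end


context loc begin

lemma near_mono: "near j z \<Longrightarrow> j \<le> k \<Longrightarrow> near k z"
  unfolding near_def using reach_mono[of "Gm G Y" j u z k] reach_mono[of "Gm G Y" j w z k] by blast

lemma pi_eq_near: assumes "near j z" "j \<le> \<rho>1" "j \<le> \<rho>2" "\<rho>1 \<le> R" "\<rho>2 \<le> R"
  shows "pi \<rho>1 z = pi \<rho>2 z"
proof (cases "rc j u z")
  case True
  have "rc \<rho>1 u z" using True assms(2) by (rule reach_mono)
  moreover have "rc \<rho>2 u z" using True assms(3) by (rule reach_mono)
  ultimately show ?thesis using pi_u by simp
next
  case False
  then have W: "rc j w z" using assms(1) unfolding near_def by blast
  have "rc \<rho>1 w z" using W assms(2) by (rule reach_mono)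
  moreover have "rc \<rho>2 w z" using W assms(3) by (rule reach_mono)
  ultimately show ?thesis using pi_w assms(4,5) by simp
qed

lemma choose:
  assumes n: "n = Suc n'" and b1: "Suc (mg n) \<le> \<rho>" and b2: "\<rho> + mg n + n*(2*mg n+1) \<le> R"
  shows "\<exists>\<rho>''. Suc (mg n') \<le> \<rho>'' \<and> \<rho>'' + mg n' + n'*(2*mg n'+1) \<le> R \<and> safe \<rho>'' (mg n') p
     \<and> (\<forall>z. safe \<rho> (mg n) z \<longrightarrow> safe \<rho>'' (mg n') z \<and> pi \<rho>'' z = pi \<rho> z)"
proof -
  define m where "m = mg n'"
  define M where "M = mg n"
  have M: "M = 3*m+1" unfolding M_def m_def n by simp
  have b2': "\<rho> + M + n*(2*M+1) \<le> R" using b2 unfolding M_def .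
  have nn: "n*(2*M+1) = n*(2*m+1) + n*(4*m+2)" unfolding M by (simp add: algebra_simps)
  have nn2: "n*(2*m+1) = n'*(2*m+1) + (2*m+1)" unfolding n by simp
  show ?thesis
  proof (cases "safe \<rho> m p")
    case True
    have "Suc m \<le> \<rho>" using b1 M unfolding M_def by simp
    moreover have "\<rho> + m + n'*(2*m+1) \<le> R" using b2' nn nn2 M by linarith
    moreover have "safe \<rho> M z \<Longrightarrow> safe \<rho> m z" for z
    proof -
      assume "safe \<rho> M z"
      moreover have "near (\<rho> - Suc M) z \<Longrightarrow> near (\<rho> - Suc m) z" using near_mono M by simp
      moreover have "\<not> near (\<rho> + M) z \<Longrightarrow> \<not> near (\<rho> + m) z" using near_mono M by fastforce
      ultimately show ?thesis unfolding safe_def by blast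
    qed
    ultimately show ?thesis using True unfolding m_def M_def by blast
  next
    case False
    define \<rho>' where "\<rho>' = \<rho> + 2*m + 1"
    have r1: "Suc m \<le> \<rho>'" unfolding \<rho>'_def by simp
    have r2: "\<rho>' + m + n'*(2*m+1) \<le> R" using b2' nn nn2 M unfolding \<rho>'_def by linarith
    have rR: "\<rho>' \<le> R" "\<rho> \<le> R" using r2 unfolding \<rho>'_def by auto
    have "near (\<rho> + m) p" using False unfolding safe_def by blast
    moreover have "\<rho>' - Suc m = \<rho> + m" unfolding \<rho>'_def by simp
    ultimately have sp: "safe \<rho>' m p" unfolding safe_def by simp
    have "safe \<rho> M z \<Longrightarrow> safe \<rho>' m z \<and> pi \<rho>' z = pi \<rho> z" for z
    proof -
      assume "safe \<rho> M z"
      then consider "near (\<rho> - Suc M) z" | "\<not> near (\<rho> + M) z" unfolding safe_def by blast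
      then show ?thesis
      proof cases
        case 1
        have "\<rho> - Suc M \<le> \<rho>' - Suc m" unfolding \<rho>'_def by simp
        then have "near (\<rho>' - Suc m) z" using near_mono 1 by blast
        moreover have "pi \<rho>' z = pi \<rho> z"
          by (rule pi_eq_near[OF 1]) (use rR in \<open>auto simp: \<rho>'_def\<close>)
        ultimately show ?thesis unfolding safe_def by blast
      next
        case 2
        have e: "\<rho>' + m = \<rho> + M" unfolding \<rho>'_def M by simp
        have "\<not> near \<rho>' z" using 2 near_mono[of \<rho>' z "\<rho> + M"] e by linarith
        moreover have "\<not> near \<rho> z" using 2 near_mono[of \<rho> z "\<rho> + M"] by linarith
        ultimately show ?thesis using 2 e pi_o unfolding safe_def by simp
      qed
    qed
    then show ?thesis using r1 r2 sp unfolding m_def M_def by blast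
  qed
qed

lemma main:
  "qr \<phi> \<le> n \<Longrightarrow> cols \<phi> \<subseteq> K \<Longrightarrow> Suc (mg n) \<le> \<rho> \<Longrightarrow> \<rho> + mg n + n*(2*mg n+1) \<le> R
   \<Longrightarrow> (\<forall>i. s i \<in> verts G \<and> safe \<rho> (mg n) (s i)) \<Longrightarrow> sat G s \<phi> \<longleftrightarrow> sat G (pi \<rho> \<circ> s) \<phi>"
proof (induction \<phi> arbitrary: n \<rho> s)
  case (Eq x y)
  have "\<rho> \<le> R" using Eq by linarith
  then show ?case using pi_inj[of \<rho> "s x" "s y"] by auto
next
  case (Adj x y)
  have "\<rho> \<le> R" using Adj by linarith
  moreover have "1 \<le> mg n" by (rule mg_ge1)
  ultimately show ?case using pi_adj[of "mg n" \<rho> "s x" "s y"] Adj by auto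
next
  case (Col i x)
  have "\<rho> \<le> R" using Col by linarith
  then show ?case using pi_col[of i \<rho> "s x"] Col by auto
next
  case (Neg \<phi>)
  have "sat G s \<phi> \<longleftrightarrow> sat G (pi \<rho> \<circ> s) \<phi>"
    by (rule Neg.IH[of n]) (use Neg.prems in auto)
  then show ?case by (simp only: sat.simps)
next
  case (Conj \<phi>1 \<phi>2)
  have "sat G s \<phi>1 \<longleftrightarrow> sat G (pi \<rho> \<circ> s) \<phi>1"
    by (rule Conj.IH(1)[of n]) (use Conj.prems in auto)
  moreover have "sat G s \<phi>2 \<longleftrightarrow> sat G (pi \<rho> \<circ> s) \<phi>2"
    by (rule Conj.IH(2)[of n]) (use Conj.prems in auto)
  ultimately show ?case by (simp only: sat.simps)
next
  case (Ex x \<phi>)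
  obtain n' where n: "n = Suc n'" and q: "qr \<phi> \<le> n'" using Ex.prems(1) by (cases n) auto
  have cK: "cols \<phi> \<subseteq> K" using Ex.prems(2) by simp
  have RR: "\<rho> \<le> R" using Ex.prems(4) by linarith
  show ?case
  proof
    assume "sat G s (fm.Ex x \<phi>)"
    then obtain a where a: "a \<in> verts G" "sat G (s(x := a)) \<phi>" by auto
    obtain \<rho>'' where c: "Suc (mg n') \<le> \<rho>''" "\<rho>'' + mg n' + n'*(2*mg n'+1) \<le> R" "safe \<rho>'' (mg n') a"
      "\<forall>z. safe \<rho> (mg n) z \<longrightarrow> safe \<rho>'' (mg n') z \<and> pi \<rho>'' z = pi \<rho> z"
      using choose[OF n Ex.prems(3,4)] by blast
    have R2: "\<rho>'' \<le> R" using c(2) by linarith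
    have vals: "\<forall>i. (s(x := a)) i \<in> verts G \<and> safe \<rho>'' (mg n') ((s(x := a)) i)"
      using Ex.prems(5) c(3,4) a(1) by auto
    have "sat G (s(x := a)) \<phi> \<longleftrightarrow> sat G (pi \<rho>'' \<circ> s(x := a)) \<phi>"
      by (rule Ex.IH[OF q cK c(1,2) vals])
    then have "sat G (pi \<rho>'' \<circ> s(x := a)) \<phi>" using a(2) by blast
    moreover have "pi \<rho>'' \<circ> s(x := a) = (pi \<rho> \<circ> s)(x := pi \<rho>'' a)"
      using Ex.prems(5) c(4) by (auto simp: fun_eq_iff)
    ultimately show "sat G (pi \<rho> \<circ> s) (fm.Ex x \<phi>)" using pi_verts[OF a(1) R2] by auto
  next
    assume "sat G (pi \<rho> \<circ> s) (fm.Ex x \<phi>)"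
    then obtain a' where a': "a' \<in> verts G" "sat G ((pi \<rho> \<circ> s)(x := a')) \<phi>" by auto
    obtain \<rho>'' where c: "Suc (mg n') \<le> \<rho>''" "\<rho>'' + mg n' + n'*(2*mg n'+1) \<le> R" "safe \<rho>'' (mg n') a'"
      "\<forall>z. safe \<rho> (mg n) z \<longrightarrow> safe \<rho>'' (mg n') z \<and> pi \<rho>'' z = pi \<rho> z"
      using choose[OF n Ex.prems(3,4)] by blast
    have R2: "\<rho>'' \<le> R" and R3: "\<rho>'' + mg n' \<le> R" using c(2) by linarith+
    define a where "a = pi \<rho>'' a'"
    have av: "a \<in> verts G" unfolding a_def using pi_verts[OF a'(1) R2] .
    have as: "safe \<rho>'' (mg n') a" unfolding a_def using safe_pi[OF R2 R3] c(3) by simp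
    have vals: "\<forall>i. (s(x := a)) i \<in> verts G \<and> safe \<rho>'' (mg n') ((s(x := a)) i)"
      using Ex.prems(5) c(4) av as by auto
    have "pi \<rho>'' \<circ> s(x := a) = (pi \<rho> \<circ> s)(x := a')"
      using Ex.prems(5) c(4) pi_inv[OF R2] unfolding a_def by (auto simp: fun_eq_iff)
    moreover have "sat G (s(x := a)) \<phi> \<longleftrightarrow> sat G (pi \<rho>'' \<circ> s(x := a)) \<phi>"
      by (rule Ex.IH[OF q cK c(1,2) vals])
    ultimately have "sat G (s(x := a)) \<phi>" using a'(2) by simp
    then show "sat G s (fm.Ex x \<phi>)" using av by auto
  qed
qed

lemma twin:
  assumes q: "qr \<psi> \<le> q" and K: "cols \<psi> \<subseteq> K" and R: "Suc (mg q) + mg q + q*(2*mg q+1) \<le> R"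
    and x: "x \<in> verts G" and xu: "\<not> rc (2*mg q+1) u x" and xw: "\<not> rc (2*mg q+1) w x"
  shows "sat2 G \<psi> u x \<longleftrightarrow> sat2 G \<psi> w x"
proof -
  define \<rho> where "\<rho> = Suc (mg q)"
  define s where "s = (\<lambda>i::nat. if i = 1 then x else u)"
  have su: "safe \<rho> (mg q) u" unfolding safe_def near_def \<rho>_def by simp
  have e: "\<rho> + mg q = 2*mg q+1" unfolding \<rho>_def by simp
  have "\<not> near (\<rho> + mg q) x" unfolding e near_def using xu xw by blast
  then have sx: "safe \<rho> (mg q) x" unfolding safe_def by blast
  have vals: "\<forall>i. s i \<in> verts G \<and> safe \<rho> (mg q) (s i)" unfolding s_def using su sx x uv by simp
  have RR: "\<rho> \<le> R" using R unfolding \<rho>_def by linarith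
  have "rc \<rho> u u" by (rule reach_mono[of _ 0]) auto
  then have pu: "pi \<rho> u = w" using pi_u sroot by simp
  have l: "\<rho> \<le> 2*mg q+1" unfolding \<rho>_def by simp
  have "\<not> near \<rho> x" using rc_mono_not[OF xu l] rc_mono_not[OF xw l] unfolding near_def by blast
  then have px: "pi \<rho> x = x" by (rule pi_o)
  have "pi \<rho> \<circ> s = (\<lambda>i. if i = 1 then x else w)" unfolding s_def using pu px by auto
  moreover have "sat G s \<psi> \<longleftrightarrow> sat G (pi \<rho> \<circ> s) \<psi>"
    by (rule main[OF q K _ _ vals]) (use R in \<open>auto simp: \<rho>_def\<close>)
  ultimately show ?thesis unfolding sat2_def s_def by simp
qed

end


definition idx :: "nat list \<Rightarrow> nat \<Rightarrow> nat" where
  "idx l a = (THE i. i < length l \<and> l ! i = a)"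

lemma idx: "distinct l \<Longrightarrow> a \<in> set l \<Longrightarrow> idx l a < length l \<and> l ! idx l a = a"
  unfolding idx_def by (rule theI') (rule distinct_Ex1)

lemma idx_nth: "distinct l \<Longrightarrow> i < length l \<Longrightarrow> idx l (l ! i) = i"
  unfolding idx_def by (rule the_equality) (auto simp: nth_eq_iff_index_eq)

definition code :: "nat cgraph \<Rightarrow> nat set \<Rightarrow> nat set \<Rightarrow> nat \<Rightarrow> nat \<Rightarrow>
    nat \<times> nat set \<times> (nat \<times> nat) set \<times> (nat \<times> nat) set \<times> (nat \<times> nat) set \<times> (nat \<times> nat) set" where
  "code G Y K R u = (let l = sorted_list_of_set (ball (Gm G Y) R u); n = length l;
      yl = sorted_list_of_set Y in
     (n, {i. i < n \<and> l ! i = u}, {(i, j). i < n \<and> j < n \<and> adj G (l ! i) (l ! j)},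
      {(c, i). c \<in> K \<and> i < n \<and> l ! i \<in> col G c},
      {(i, j). i < n \<and> j < length yl \<and> adj G (l ! i) (yl ! j)},
      {(i, k). i < n \<and> k \<le> R \<and> reach (Gm G Y) k u (l ! i)}))"

lemma wf_adj_verts: "wf_cgraph G \<Longrightarrow> adj (Gm G Y) x y \<Longrightarrow> y \<in> verts (Gm G Y)"
  unfolding wf_cgraph_def by auto

lemma reach_Gm_verts: "wf_cgraph G \<Longrightarrow> u \<in> verts G \<Longrightarrow> reach (Gm G Y) k u a \<Longrightarrow> a \<in> verts G"
  using reach_verts[of "Gm G Y" k u a] wf_adj_verts[of G Y] by auto

lemma code_loc:
  fixes G :: "nat cgraph"
  assumes wf: "wf_cgraph G" and fY: "finite Y" and uv: "u \<in> verts G" and wv: "w \<in> verts G"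
    and uY: "u \<notin> Y" and wY: "w \<notin> Y" and far: "\<not> reach (Gm G Y) (2*R+2) u w"
    and eq: "code G Y K R u = code G Y K R w"
  shows "\<exists>\<sigma> \<tau>. loc G Y K R u w \<sigma> \<tau>"
proof -
  define lu where "lu = sorted_list_of_set (ball (Gm G Y) R u)"
  define lw where "lw = sorted_list_of_set (ball (Gm G Y) R w)"
  define yl where "yl = sorted_list_of_set Y"
  have fv: "finite (verts G)" using wf unfolding wf_cgraph_def by auto
  have fu: "finite (ball (Gm G Y) R u)" "finite (ball (Gm G Y) R w)"
    using fv unfolding ball_def by auto
  have dl: "distinct lu" "distinct lw" "distinct yl" unfolding lu_def lw_def yl_def by auto
  have sl: "set lu = ball (Gm G Y) R u" "set lw = ball (Gm G Y) R w" "set yl = Y"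
    unfolding lu_def lw_def yl_def using fu fY by auto
  have bu: "a \<in> set lu \<longleftrightarrow> reach (Gm G Y) R u a" for a
    using sl reach_Gm_verts[OF wf uv] unfolding ball_def by auto
  have bw: "a \<in> set lw \<longleftrightarrow> reach (Gm G Y) R w a" for a
    using sl reach_Gm_verts[OF wf wv] unfolding ball_def by auto
  have E: "length lu = length lw \<and>
      {i. i < length lu \<and> lu ! i = u} = {i. i < length lw \<and> lw ! i = w} \<and>
      {(i, j). i < length lu \<and> j < length lu \<and> adj G (lu ! i) (lu ! j)} = {(i, j). i < length lw \<and> j < length lw \<and> adj G (lw ! i) (lw ! j)} \<and>
      {(c, i). c \<in> K \<and> i < length lu \<and> lu ! i \<in> col G c} = {(c, i). c \<in> K \<and> i < length lw \<and> lw ! i \<in> col G c} \<and>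
      {(i, j). i < length lu \<and> j < length yl \<and> adj G (lu ! i) (yl ! j)} = {(i, j). i < length lw \<and> j < length yl \<and> adj G (lw ! i) (yl ! j)} \<and>
      {(i, k). i < length lu \<and> k \<le> R \<and> reach (Gm G Y) k u (lu ! i)} = {(i, k). i < length lw \<and> k \<le> R \<and> reach (Gm G Y) k w (lw ! i)}"
    using eq unfolding code_def Let_def lu_def lw_def yl_def prod.inject .
  note E1 = conjunct1[OF E] and E2 = conjunct1[OF conjunct2[OF E]]
    and E3 = conjunct1[OF conjunct2[OF conjunct2[OF E]]]
    and E4 = conjunct1[OF conjunct2[OF conjunct2[OF conjunct2[OF E]]]]
    and E5 = conjunct1[OF conjunct2[OF conjunct2[OF conjunct2[OF conjunct2[OF E]]]]]
    and E6 = conjunct2[OF conjunct2[OF conjunct2[OF conjunct2[OF conjunct2[OF E]]]]]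
  have len: "length lu = length lw" by (rule E1)
  have Eroot: "\<And>i. i < length lu \<Longrightarrow> lu ! i = u \<longleftrightarrow> lw ! i = w"
  proof -
    fix i assume i: "i < length lu"
    have "i \<in> {i. i < length lu \<and> lu ! i = u} \<longleftrightarrow> i \<in> {i. i < length lw \<and> lw ! i = w}" using E2 by simp
    then show "lu ! i = u \<longleftrightarrow> lw ! i = w" using i len by simp
  qed
  have Eadj: "\<And>i j. i < length lu \<Longrightarrow> j < length lu \<Longrightarrow> adj G (lu ! i) (lu ! j) \<longleftrightarrow> adj G (lw ! i) (lw ! j)"
  proof -
    fix i j assume i: "i < length lu" "j < length lu"
    have "(i, j) \<in> {(i, j). i < length lu \<and> j < length lu \<and> adj G (lu ! i) (lu ! j)} \<longleftrightarrow>
      (i, j) \<in> {(i, j). i < length lw \<and> j < length lw \<and> adj G (lw ! i) (lw ! j)}" using E3 by simp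
    then show "adj G (lu ! i) (lu ! j) \<longleftrightarrow> adj G (lw ! i) (lw ! j)" using i len by simp
  qed
  have Ecol: "\<And>i c. i < length lu \<Longrightarrow> c \<in> K \<Longrightarrow> lu ! i \<in> col G c \<longleftrightarrow> lw ! i \<in> col G c"
  proof -
    fix i c assume i: "i < length lu" "c \<in> K"
    have "(c, i) \<in> {(c, i). c \<in> K \<and> i < length lu \<and> lu ! i \<in> col G c} \<longleftrightarrow>
       (c, i) \<in> {(c, i). c \<in> K \<and> i < length lw \<and> lw ! i \<in> col G c}" using E4 by simp
    then show "lu ! i \<in> col G c \<longleftrightarrow> lw ! i \<in> col G c" using i len by simp
  qed
  have EY: "\<And>i j. i < length lu \<Longrightarrow> j < length yl \<Longrightarrow> adj G (lu ! i) (yl ! j) \<longleftrightarrow> adj G (lw ! i) (yl ! j)"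
  proof -
    fix i j assume i: "i < length lu" "j < length yl"
    have "(i, j) \<in> {(i, j). i < length lu \<and> j < length yl \<and> adj G (lu ! i) (yl ! j)} \<longleftrightarrow>
       (i, j) \<in> {(i, j). i < length lw \<and> j < length yl \<and> adj G (lw ! i) (yl ! j)}" using E5 by simp
    then show "adj G (lu ! i) (yl ! j) \<longleftrightarrow> adj G (lw ! i) (yl ! j)" using i len by simp
  qed
  have Ed: "\<And>i k. i < length lu \<Longrightarrow> k \<le> R \<Longrightarrow> reach (Gm G Y) k u (lu ! i) \<longleftrightarrow> reach (Gm G Y) k w (lw ! i)"
  proof -
    fix i k assume i: "i < length lu" "k \<le> R"
    have "(i, k) \<in> {(i, k). i < length lu \<and> k \<le> R \<and> reach (Gm G Y) k u (lu ! i)} \<longleftrightarrow>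
       (i, k) \<in> {(i, k). i < length lw \<and> k \<le> R \<and> reach (Gm G Y) k w (lw ! i)}" using E6 by simp
    then show "reach (Gm G Y) k u (lu ! i) \<longleftrightarrow> reach (Gm G Y) k w (lw ! i)" using i len by simp
  qed
  define \<sigma> where "\<sigma> a = lw ! idx lu a" for a
  define \<tau> where "\<tau> b = lu ! idx lw b" for b
  have ia: "reach (Gm G Y) R u a \<Longrightarrow> idx lu a < length lu \<and> lu ! idx lu a = a" for a
    using idx[OF dl(1)] bu by blast
  have ib: "reach (Gm G Y) R w b \<Longrightarrow> idx lw b < length lw \<and> lw ! idx lw b = b" for b
    using idx[OF dl(2)] bw by blast
  have uu: "reach (Gm G Y) R u u" by (rule reach_mono[of _ 0]) auto
  show ?thesis
  proof (intro exI, unfold_locales)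
    show "wf_cgraph G" "u \<in> verts G" "w \<in> verts G" "u \<notin> Y" "w \<notin> Y" "\<not> reach (Gm G Y) (2*R+2) u w"
      using assms by auto
  next
    fix a assume a: "reach (Gm G Y) R u a"
    have "\<sigma> a \<in> set lw" unfolding \<sigma>_def using ia[OF a] len by auto
    moreover have "\<tau> (\<sigma> a) = a" unfolding \<sigma>_def \<tau>_def using ia[OF a] len idx_nth[OF dl(2)] by auto
    ultimately show "reach (Gm G Y) R w (\<sigma> a) \<and> \<tau> (\<sigma> a) = a" using bw by blast
  next
    fix b assume b: "reach (Gm G Y) R w b"
    have "\<tau> b \<in> set lu" unfolding \<tau>_def using ib[OF b] len by auto
    moreover have "\<sigma> (\<tau> b) = b" unfolding \<sigma>_def \<tau>_def using ib[OF b] len idx_nth[OF dl(1)] by auto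
    ultimately show "reach (Gm G Y) R u (\<tau> b) \<and> \<sigma> (\<tau> b) = b" using bu by blast
  next
    show "\<sigma> u = w" unfolding \<sigma>_def using ia[OF uu] Eroot by blast
  next
    fix a b assume a: "reach (Gm G Y) R u a" and b: "reach (Gm G Y) R u b"
    show "adj G a b \<longleftrightarrow> adj G (\<sigma> a) (\<sigma> b)" unfolding \<sigma>_def
      using Eadj[of "idx lu a" "idx lu b"] ia[OF a] ia[OF b] by simp
  next
    fix a i assume a: "reach (Gm G Y) R u a" and i: "i \<in> K"
    show "a \<in> col G i \<longleftrightarrow> \<sigma> a \<in> col G i" unfolding \<sigma>_def
      using Ecol[of "idx lu a" i] ia[OF a] i by simp
  next
    fix a y assume a: "reach (Gm G Y) R u a" and y: "y \<in> Y"
    have iy: "idx yl y < length yl \<and> yl ! idx yl y = y" using idx[OF dl(3)] sl(3) y by blast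
    show "adj G a y \<longleftrightarrow> adj G (\<sigma> a) y" unfolding \<sigma>_def
      using EY[of "idx lu a" "idx yl y"] ia[OF a] iy by simp
  next
    fix a k assume a: "reach (Gm G Y) R u a" and k: "k \<le> R"
    show "reach (Gm G Y) k u a \<longleftrightarrow> reach (Gm G Y) k w (\<sigma> a)" unfolding \<sigma>_def
      using Ed[of "idx lu a" k] ia[OF a] k by simp
  qed
qed



lemma ball_card:
  fixes H :: "nat cgraph"
  assumes fin: "finite (verts H)" and av: "\<And>x y. adj H x y \<Longrightarrow> x \<in> verts H \<and> y \<in> verts H"
    and deg: "\<And>z j. j < n \<Longrightarrow> reach H j u z \<Longrightarrow> z \<in> verts H \<Longrightarrow> card (nbrs H z) \<le> D"
  shows "card (ball H n u) \<le> (D+1)^n"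
  using deg
proof (induction n)
  case 0
  have "ball H 0 u \<subseteq> {u}" unfolding ball_def by auto
  then have "card (ball H 0 u) \<le> card {u}" by (rule card_mono[rotated]) simp
  then show ?case by simp
next
  case (Suc n)
  have IH: "card (ball H n u) \<le> (D+1)^n"
    by (rule Suc.IH) (rule Suc.prems, auto)
  have fb: "finite (ball H n u)" using fin unfolding ball_def by auto
  have sub: "ball H (Suc n) u \<subseteq> ball H n u \<union> (\<Union>z\<in>ball H n u. nbrs H z)"
  proof
    fix x assume "x \<in> ball H (Suc n) u"
    then have x: "x \<in> verts H" "reach H n u x \<or> (\<exists>z. reach H n u z \<and> adj H z x)" unfolding ball_def by auto
    then show "x \<in> ball H n u \<union> (\<Union>z\<in>ball H n u. nbrs H z)"
      unfolding ball_def nbrs_def using av by blast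
  qed
  have "card (ball H (Suc n) u) \<le> card (ball H n u \<union> (\<Union>z\<in>ball H n u. nbrs H z))"
    by (rule card_mono[OF _ sub]) (use fin in \<open>auto simp: ball_def nbrs_def\<close>)
  also have "\<dots> \<le> card (ball H n u) + card (\<Union>z\<in>ball H n u. nbrs H z)" by (rule card_Un_le)
  also have "card (\<Union>z\<in>ball H n u. nbrs H z) \<le> (\<Sum>z\<in>ball H n u. card (nbrs H z))"
    by (rule card_UN_le[OF fb])
  also have "(\<Sum>z\<in>ball H n u. card (nbrs H z)) \<le> card (ball H n u) * D"
  proof -
    have "\<forall>z\<in>ball H n u. card (nbrs H z) \<le> D" using Suc.prems unfolding ball_def by auto
    then show ?thesis using sum_bounded_above[of "ball H n u" "\<lambda>z. card (nbrs H z)" D] by simp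
  qed
  finally have "card (ball H (Suc n) u) \<le> card (ball H n u) * (D+1)" by (simp add: algebra_simps)
  also have "\<dots> \<le> (D+1)^n * (D+1)" using IH by (rule mult_right_mono) simp
  finally show ?case by (simp add: algebra_simps)
qed

definition codeset :: "nat set \<Rightarrow> nat \<Rightarrow> nat \<Rightarrow> nat \<Rightarrow>
    (nat \<times> nat set \<times> (nat \<times> nat) set \<times> (nat \<times> nat) set \<times> (nat \<times> nat) set \<times> (nat \<times> nat) set) set" where
  "codeset K M F R = {..M} \<times> Pow {..<M} \<times> Pow ({..<M} \<times> {..<M}) \<times> Pow (K \<times> {..<M})
     \<times> Pow ({..<M} \<times> {..<F}) \<times> Pow ({..<M} \<times> {..R})"

lemma finite_codeset: "finite K \<Longrightarrow> finite (codeset K M F R)"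
  unfolding codeset_def by (intro finite_cartesian_product) auto

lemma code_in:
  assumes "finite (ball (Gm G Y) R u)" "card (ball (Gm G Y) R u) \<le> M" "finite Y" "card Y \<le> F"
  shows "code G Y K R u \<in> codeset K M F R"
proof -
  define l where "l = sorted_list_of_set (ball (Gm G Y) R u)"
  have n: "length l \<le> M" using assms unfolding l_def by simp
  have y: "length (sorted_list_of_set Y) \<le> F" using assms by simp
  show ?thesis unfolding code_def Let_def codeset_def l_def[symmetric] using n y by auto
qed

lemma reach_interp:
  fixes G :: "nat cgraph"
  assumes wf: "wf_cgraph G" and rng: "has_range \<psi> b"
  shows "reach (interp \<psi> \<delta> G) j v x \<Longrightarrow> reach G (j*b) v x"
proof (induction j arbitrary: x)
  case 0 then show ?case by (simp add: interp_def)
next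
  case (Suc j)
  then consider "reach (interp \<psi> \<delta> G) j v x" | z where "reach (interp \<psi> \<delta> G) j v z" "adj (interp \<psi> \<delta> G) z x"
    by auto
  then show ?case
  proof cases
    case 1
    then show ?thesis using Suc.IH reach_mono[of G "j*b" v x "Suc j * b"] by simp
  next
    case 2
    have z: "z \<in> verts G" "x \<in> verts G" "sat2 G \<psi> z x" using 2(2) unfolding interp_def Let_def by auto
    have "reach G b z x" using rng z wf unfolding has_range_def by blast
    then have "reach G (j*b + b) v x" by (rule reach_trans[OF Suc.IH[OF 2(1)]])
    then show ?thesis by (simp add: add.commute)
  qed
qed



lemma local_bound:
  fixes G :: "nat cgraph"
  assumes wf: "wf_cgraph G" and rng: "has_range \<psi> b"
    and Rdef: "R = Suc (mg (qr \<psi>)) + mg (qr \<psi>) + qr \<psi> * (2*mg (qr \<psi>)+1)"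
    and fd: "\<forall>v\<in>verts G. card {u \<in> ball G (r*b+2*R+2) v. d1 < degree G u} \<le> f1"
    and v: "v \<in> verts (interp \<psi> \<delta> G)"
  shows "near_covered (induced (interp \<psi> \<delta> G) (ball (interp \<psi> \<delta> G) r v)) (2*(d1+1)^(2*mg (qr \<psi>)+1))
           (f1 + card (codeset (cols \<psi>) ((d1+1)^R) f1 R) * (d1+1)^(2*R+2))"
proof -
  define H where "H = interp \<psi> \<delta> G"
  define B where "B = ball H r v"
  define I where "I = induced H B"
  define W where "W = verts H"
  define q where "q = qr \<psi>"
  define K where "K = cols \<psi>"
  define L where "L = 2*mg q+1"
  define R1 where "R1 = r*b+2*R+2"
  define Y where "Y = {u \<in> ball G R1 v. d1 < degree G u}"
  define kk where "kk = 2*(d1+1)^L"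
  define bnd where "bnd = (d1+1)^(2*R+2)"
  have Wdef: "W = {x \<in> verts G. sat1 G \<delta> x}" unfolding W_def H_def interp_def Let_def by simp
  have adjH: "adj H a x \<longleftrightarrow> a \<in> W \<and> x \<in> W \<and> a \<noteq> x \<and> sat2 G \<psi> a x" for a x
    unfolding W_def H_def interp_def Let_def by simp
  have WG: "W \<subseteq> verts G" using Wdef by auto
  have vG: "v \<in> verts G" using v WG unfolding W_def H_def by auto
  have fv: "finite (verts G)" using wf unfolding wf_cgraph_def by auto
  have fY: "finite Y" using fv unfolding Y_def ball_def by auto
  have cY: "card Y \<le> f1" using fd vG unfolding Y_def R1_def by auto
  have LR: "L \<le> 2*R+2" unfolding L_def Rdef q_def by simp
  have BG: "x \<in> B \<Longrightarrow> reach G (r*b) v x \<and> x \<in> W" for x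
    using reach_interp[OF wf rng] unfolding B_def ball_def W_def H_def by blast
  have vertsI: "verts I = W \<inter> B" unfolding I_def induced_def W_def by simp
  have nbrsI: "nbrs I a = {x \<in> W \<inter> B. adj H a x \<and> a \<in> B \<and> x \<in> B}" for a
    unfolding nbrs_def I_def induced_def W_def by simp
  have avG: "\<And>x y. adj (Gm G Y) x y \<Longrightarrow> x \<in> verts (Gm G Y) \<and> y \<in> verts (Gm G Y)"
    using wf unfolding wf_cgraph_def by auto
  have ballsz: "card (ball (Gm G Y) j u) \<le> (d1+1)^j"
    if u: "u \<in> verts G" "reach G (r*b) v u" and j: "j \<le> 2*R+2" for u j
  proof (rule ball_card)
    show "finite (verts (Gm G Y))" using fv by simp
    show "\<And>x y. adj (Gm G Y) x y \<Longrightarrow> x \<in> verts (Gm G Y) \<and> y \<in> verts (Gm G Y)" by (rule avG)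
  next
    fix z j' assume j': "j' < j" and rz: "reach (Gm G Y) j' u z" and zv: "z \<in> verts (Gm G Y)"
    show "card (nbrs (Gm G Y) z) \<le> d1"
    proof (cases "z \<in> Y")
      case True
      then have "nbrs (Gm G Y) z = {}" unfolding nbrs_def by auto
      then show ?thesis by simp
    next
      case False
      have "reach G j' u z" using rz by (rule reach_sub) simp
      then have "reach G (r*b + j') v z" by (rule reach_trans[OF u(2)])
      then have "reach G R1 v z" by (rule reach_mono) (use j j' in \<open>simp add: R1_def\<close>)
      then have "z \<in> ball G R1 v" using zv unfolding ball_def by simp
      then have dz: "degree G z \<le> d1" using False unfolding Y_def by auto
      have "nbrs (Gm G Y) z \<subseteq> nbrs G z" unfolding nbrs_def by auto
      moreover have "finite (nbrs G z)" using fv unfolding nbrs_def by auto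
      ultimately have "card (nbrs (Gm G Y) z) \<le> degree G z" unfolding degree_def by (rule card_mono[rotated])
      then show ?thesis using dz by simp
    qed
  qed
  have fball: "finite (ball (Gm G Y) j u)" for j u using fv unfolding ball_def by simp
  show ?thesis
    unfolding near_covered_def H_def[symmetric] B_def[symmetric] I_def[symmetric]
      q_def[symmetric] L_def[symmetric] kk_def[symmetric] bnd_def[symmetric] K_def[symmetric]
  proof (intro allI impI)
    fix S assume S: "S \<subseteq> verts I" and pw: "\<forall>u\<in>S. \<forall>w\<in>S. u \<noteq> w \<longrightarrow> \<not> near_twins I kk u w"
    have Sf: "u \<in> W \<and> u \<in> B \<and> u \<in> verts G \<and> reach G (r*b) v u" if "u \<in> S" for u
      using that S vertsI BG WG by blast
    have claim: "near_twins I kk u w"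
      if u: "u \<in> S" "u \<notin> Y" and w: "w \<in> S" "w \<notin> Y" and c: "code G Y K R u = code G Y K R w"
        and far: "\<not> reach (Gm G Y) (2*R+2) u w" for u w
    proof -
      obtain \<sigma> \<tau> where lc: "loc G Y K R u w \<sigma> \<tau>"
        using code_loc[OF wf fY _ _ u(2) w(2) far c] Sf u(1) w(1) by blast
      have tw: "sat2 G \<psi> u x \<longleftrightarrow> sat2 G \<psi> w x"
        if "x \<in> verts G" "\<not> reach (Gm G Y) L u x" "\<not> reach (Gm G Y) L w x" for x
        using loc.twin[OF lc, of \<psi> q x] that Rdef unfolding q_def K_def L_def by simp
      have uu: "reach (Gm G Y) L u u" "reach (Gm G Y) L w w" by (rule reach_mono[of _ 0]; simp)+
      have sub: "(nbrs I u - nbrs I w) \<union> (nbrs I w - nbrs I u) \<subseteq> ball (Gm G Y) L u \<union> ball (Gm G Y) L w"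
      proof
        fix x assume x: "x \<in> (nbrs I u - nbrs I w) \<union> (nbrs I w - nbrs I u)"
        then have xW: "x \<in> W" "x \<in> B" using nbrsI by auto
        then have xG: "x \<in> verts G" using WG by auto
        show "x \<in> ball (Gm G Y) L u \<union> ball (Gm G Y) L w"
        proof (rule ccontr)
          assume "\<not> ?thesis"
          then have nx: "\<not> reach (Gm G Y) L u x" "\<not> reach (Gm G Y) L w x" using xG unfolding ball_def by auto
          then have "x \<noteq> u" "x \<noteq> w" using uu by auto
          then have "adj H u x \<longleftrightarrow> adj H w x" using adjH tw[OF xG nx] Sf[OF u(1)] Sf[OF w(1)] by auto
          then have "x \<in> nbrs I u \<longleftrightarrow> x \<in> nbrs I w" using nbrsI Sf[OF u(1)] Sf[OF w(1)] by auto
          then show False using x by blast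
        qed
      qed
      have "card ((nbrs I u - nbrs I w) \<union> (nbrs I w - nbrs I u)) \<le> card (ball (Gm G Y) L u \<union> ball (Gm G Y) L w)"
        by (rule card_mono[OF _ sub]) (simp add: fball)
      also have "\<dots> \<le> card (ball (Gm G Y) L u) + card (ball (Gm G Y) L w)" by (rule card_Un_le)
      also have "\<dots> \<le> (d1+1)^L + (d1+1)^L"
      proof (rule add_mono)
        show "card (ball (Gm G Y) L u) \<le> (d1+1)^L" using Sf[OF u(1)] by (intro ballsz[OF _ _ LR]) auto
        show "card (ball (Gm G Y) L w) \<le> (d1+1)^L" using Sf[OF w(1)] by (intro ballsz[OF _ _ LR]) auto
      qed
      finally show ?thesis unfolding near_twins_def kk_def by simp
    qed
    define Fc where "Fc c = {u \<in> S - Y. code G Y K R u = c}" for c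
    have "S \<subseteq> verts G" using S vertsI WG by auto
    then have fS: "finite S" using fv by (rule finite_subset)
    have fib: "card (Fc c) \<le> bnd" for c
    proof (rule ccontr)
      assume "\<not> card (Fc c) \<le> bnd"
      then have big: "bnd < card (Fc c)" by simp
      then have "Fc c \<noteq> {}" by auto
      then obtain u where u: "u \<in> Fc c" by blast
      have uS: "u \<in> S" "u \<notin> Y" "code G Y K R u = c" using u unfolding Fc_def by auto
      have "\<not> Fc c \<subseteq> ball (Gm G Y) (2*R+2) u"
      proof
        assume "Fc c \<subseteq> ball (Gm G Y) (2*R+2) u"
        then have "card (Fc c) \<le> card (ball (Gm G Y) (2*R+2) u)" by (rule card_mono[OF fball])
        also have "\<dots> \<le> bnd" unfolding bnd_def using Sf[OF uS(1)] by (intro ballsz) auto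
        finally show False using big by simp
      qed
      then obtain w where w: "w \<in> Fc c" "w \<notin> ball (Gm G Y) (2*R+2) u" by blast
      have wS: "w \<in> S" "w \<notin> Y" "code G Y K R w = c" using w unfolding Fc_def by auto
      have far: "\<not> reach (Gm G Y) (2*R+2) u w" using w(2) Sf[OF wS(1)] unfolding ball_def by auto
      have "reach (Gm G Y) (2*R+2) u u" by (rule reach_mono[of _ 0]) simp_all
      then have "u \<noteq> w" using far by auto
      moreover have "near_twins I kk u w" using claim[OF uS(1,2) wS(1,2) _ far] uS(3) wS(3) by simp
      ultimately show False using pw uS(1) wS(1) by blast
    qed
    have img: "code G Y K R ` (S - Y) \<subseteq> codeset K ((d1+1)^R) f1 R"
    proof
      fix c assume "c \<in> code G Y K R ` (S - Y)"
      then obtain u where u: "u \<in> S" "c = code G Y K R u" by blast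
      have "card (ball (Gm G Y) R u) \<le> (d1+1)^R" using Sf[OF u(1)] by (intro ballsz) auto
      then show "c \<in> codeset K ((d1+1)^R) f1 R" using code_in[OF fball _ fY cY] u(2) by blast
    qed
    have fcs: "finite (codeset K ((d1+1)^R) f1 R)" unfolding K_def by (rule finite_codeset[OF finite_cols])
    have "S - Y = (\<Union>c\<in>code G Y K R ` (S - Y). Fc c)" unfolding Fc_def by auto
    then have "card (S - Y) \<le> (\<Sum>c\<in>code G Y K R ` (S - Y). card (Fc c))"
      using card_UN_le[of "code G Y K R ` (S - Y)" Fc] fS by simp
    also have "\<dots> \<le> card (code G Y K R ` (S - Y)) * bnd"
      using sum_bounded_above[of "code G Y K R ` (S - Y)" "\<lambda>c. card (Fc c)" bnd] fib by simp
    also have "\<dots> \<le> card (codeset K ((d1+1)^R) f1 R) * bnd"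
      by (rule mult_right_mono[OF card_mono[OF fcs img]]) simp
    finally have c1: "card (S - Y) \<le> card (codeset K ((d1+1)^R) f1 R) * bnd" .
    have "card (S \<inter> Y) \<le> card Y" by (rule card_mono[OF fY]) auto
    then have c2: "card (S \<inter> Y) \<le> f1" using cY by simp
    have "S = (S \<inter> Y) \<union> (S - Y)" by auto
    then have "card S \<le> card (S \<inter> Y) + card (S - Y)" using card_Un_le by metis
    then show "card S \<le> f1 + card (codeset K ((d1+1)^R) f1 R) * bnd" using c1 c2 by simp
  qed
qed

theorem lemma5p9:
  fixes \<psi> \<delta> :: fm and C :: "nat cgraph set" and b :: nat
  assumes "is_interpretation \<psi> \<delta>"
    and "has_range \<psi> b"
    and "\<forall>G\<in>C. wf_cgraph G"
    and "locally_almost_bounded_degree C"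
  shows "locally_almost_near_covered (interp \<psi> \<delta> ` C)"
proof -
  obtain f d :: "nat \<Rightarrow> nat" where fd: "\<forall>r. \<forall>G\<in>C. \<forall>v\<in>verts G. card {u \<in> ball G r v. d r < degree G u} \<le> f r"
    using assms(4) unfolding locally_almost_bounded_degree_def by blast
  define R where "R = Suc (mg (qr \<psi>)) + mg (qr \<psi>) + qr \<psi> * (2*mg (qr \<psi>)+1)"
  define R1 where "R1 r = r*b+2*R+2" for r
  show ?thesis unfolding locally_almost_near_covered_def
  proof (rule exI[of _ "\<lambda>r. 2*(d (R1 r)+1)^(2*mg (qr \<psi>)+1)"],
         rule exI[of _ "\<lambda>r. f (R1 r) + card (codeset (cols \<psi>) ((d (R1 r)+1)^R) (f (R1 r)) R) * (d (R1 r)+1)^(2*R+2)"],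
         intro allI ballI)
    fix r H v assume H: "H \<in> interp \<psi> \<delta> ` C" and v: "v \<in> verts H"
    obtain G where G: "G \<in> C" "H = interp \<psi> \<delta> G" using H by blast
    have fdG: "\<forall>v\<in>verts G. card {u \<in> ball G (r*b+2*R+2) v. d (R1 r) < degree G u} \<le> f (R1 r)"
      using fd G(1) unfolding R1_def by blast
    show "near_covered (induced H (ball H r v)) (2*(d (R1 r)+1)^(2*mg (qr \<psi>)+1))
        (f (R1 r) + card (codeset (cols \<psi>) ((d (R1 r)+1)^R) (f (R1 r)) R) * (d (R1 r)+1)^(2*R+2))"
      using local_bound[OF _ assms(2) R_def fdG] assms(3) G v by simp
  qed
qed


end
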